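(* Let $(\mathfrak{X},\pi)$, $a$, $s$, $S$, $m$ be as in the context. Let $z\in\mathbb{H}$, $\Phi>0$, and let $\Gamma_\Phi:(0,\infty)\to(0,\infty)$ be the strictly increasing function \[ \Gamma_\Phi(\tau):=\inf_{x\in\mathfrak{X}}\int_{\mathfrak{X}}\frac{\pi(\mathrm{d}y)}{\big(\tau^{-1}+|a_x-a_y|+\|S_x-S_y\|_2\,\Phi\big)^2}. \] If $\|m(z)\|_2\le\Phi$ and $\lim_{\tau\to\infty}\Gamma_\Phi(\tau)>\Phi^2$, then \[ \|m(z)\|\le(\Gamma_\Phi)^{-1}(\Phi^2). \]
   Context: Let $(\mathfrak{X},\pi)$ be a measure space where $\pi$ is a probability measure; $\mathcal{B}(\mathfrak{X},\mathbb{D})$ denotes bounded measurable $\mathbb{D}$-valued functions with sup norm $\|w\|=\sup_x|w_x|$; $\|\cdot\|_2$ is the norm of $L^2(\mathfrak{X},\pi)$. Let $a\in\mathcal{B}(\mathfrak{X},\mathbb{R})$, $s\in\mathcal{B}(\mathfrak{X}^2,[0,\infty))$ symmetric, $(Sw)_x=\int s_{xy}w_y\,\pi(\mathrm{d}y)$, $S_x:=(y\mapsto s_{xy})$. $m:\mathbb{H}\to\mathcal{B}(\mathfrak{X},\mathbb{H})$ is the unique solution of $-1/m(z)=z+a+Sm(z)$, $z\in\mathbb{H}$ (upper half-plane). *)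

theory Defs
  imports "HOL-Probability.Probability"
begin

definition L2norm :: "'a measure \<Rightarrow> ('a \<Rightarrow> 'b::real_normed_vector) \<Rightarrow> real" where
  "L2norm M w = sqrt (\<integral>x. (norm (w x))\<^sup>2 \<partial>M)"

definition supnorm :: "'a measure \<Rightarrow> ('a \<Rightarrow> 'b::real_normed_vector) \<Rightarrow> real" where
  "supnorm M w = (SUP x\<in>space M. norm (w x))"

definition Sop :: "'a measure \<Rightarrow> ('a \<Rightarrow> 'a \<Rightarrow> real) \<Rightarrow> ('a \<Rightarrow> complex) \<Rightarrow> 'a \<Rightarrow> complex" where
  "Sop M s w x = (\<integral>y. complex_of_real (s x y) * w y \<partial>M)"

definition Gamma :: "'a measure \<Rightarrow> ('a \<Rightarrow> real) \<Rightarrow> ('a \<Rightarrow> 'a \<Rightarrow> real) \<Rightarrow> real \<Rightarrow> real \<Rightarrow> real" where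
  "Gamma M a s \<Phi> \<tau> = (INF x\<in>space M. \<integral>y. 1 / (1 / \<tau> + \<bar>a x - a y\<bar>
        + L2norm M (\<lambda>t. s x t - s y t) * \<Phi>)\<^sup>2 \<partial>M)"

end

theory Submission
  imports Defs
begin

lemma cs_real:
  fixes X A B :: real
  assumes "A \<ge> 0" "B \<ge> 0" and H: "\<And>l. l > 0 \<Longrightarrow> X \<le> (l * A + B / l) / 2"
  shows "X \<le> sqrt A * sqrt B"
proof (cases "A > 0 \<and> B > 0")
  case True
  have "X \<le> ((sqrt B / sqrt A) * A + B / (sqrt B / sqrt A)) / 2" using True by (intro H) auto
  also have "\<dots> = sqrt A * sqrt B" using True
    by (simp add: field_simps)
  finally show ?thesis .
next
  case False
  show ?thesis
  proof (rule ccontr)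
    assume "\<not> ?thesis"
    with False assms have X: "X > 0" by auto
    show False
    proof (cases "A = 0")
      case True
      have "B / X + 1 > 0" using X assms by (simp add: add_nonneg_pos)
      then have "X \<le> (B / (B / X + 1)) / 2" using H[of "B/X+1"] True by simp
      moreover have "B / (B/X+1) \<le> X" using X assms by (simp add: field_simps)
      moreover have "\<And>Y::real. X \<le> Y/2 \<Longrightarrow> Y \<le> X \<Longrightarrow> X > 0 \<Longrightarrow> False" by linarith
      ultimately show False using X by blast
    next
      case False2: False
      then have B0: "B = 0" using False assms by auto
      have "X \<le> ((X / (A+1)) * A) / 2" using H[of "X/(A+1)"] B0 X assms by auto
      moreover have "(X / (A+1)) * A \<le> X" using X assms by (simp add: field_simps)
      moreover have "\<And>Y::real. X \<le> Y/2 \<Longrightarrow> Y \<le> X \<Longrightarrow> X > 0 \<Longrightarrow> False" by linarith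
      ultimately show False using X by blast
    qed
  qed
qed

lemma g_diff:
  fixes t t' c C :: real
  assumes "0 < t" "t < t'" "0 \<le> c" "c \<le> C"
  shows "1 / (1/t' + c)\<^sup>2 - 1 / (1/t + c)\<^sup>2 \<le> t'\<^sup>2 - t\<^sup>2"
    and "(t' - t) * t' / ((1 + C*t) * (1 + C*t')\<^sup>2) \<le> 1 / (1/t' + c)\<^sup>2 - 1 / (1/t + c)\<^sup>2"
proof -
  define h where "h = t / (1 + c*t)"
  define h' where "h' = t' / (1 + c*t')"
  have e1: "1 / (1/t + c)\<^sup>2 = h\<^sup>2" using assms unfolding h_def
    by (simp add: field_simps power2_eq_square)
  have e2: "1 / (1/t' + c)\<^sup>2 = h'\<^sup>2" using assms unfolding h'_def
    by (simp add: field_simps power2_eq_square)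
  have p1: "1 + c*t \<ge> 1" "1 + c*t' \<ge> 1" using assms by auto
  have dd: "h' - h = (t' - t) / ((1 + c*t) * (1 + c*t'))" using p1 unfolding h_def h'_def
    by (simp add: field_simps)
  have hpos: "h \<ge> 0" "h' \<ge> 0" using assms p1 unfolding h_def h'_def by auto
  have "t / (1 + c*t) \<le> t / 1" using assms p1 by (intro divide_left_mono) (auto simp: add_pos_nonneg)
  moreover have "t' / (1 + c*t') \<le> t' / 1" using assms p1 by (intro divide_left_mono) (auto simp: add_pos_nonneg)
  ultimately have hle: "h \<le> t" "h' \<le> t'" unfolding h_def h'_def by auto
  have d1: "h' - h \<le> t' - t" unfolding dd using p1 assms
    by (simp add: divide_le_eq) (smt (verit) mult_le_cancel_left1 mult_mono)
  have d0: "h' - h \<ge> 0" unfolding dd using p1 assms by simp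
  have "h'\<^sup>2 - h\<^sup>2 = (h' - h) * (h' + h)" by (simp add: power2_eq_square algebra_simps)
  also have "\<dots> \<le> (t' - t) * (t' + t)" using d1 d0 hle hpos assms
    by (intro mult_mono) auto
  also have "\<dots> = t'\<^sup>2 - t\<^sup>2" by (simp add: power2_eq_square algebra_simps)
  finally show "1 / (1/t' + c)\<^sup>2 - 1 / (1/t + c)\<^sup>2 \<le> t'\<^sup>2 - t\<^sup>2" using e1 e2 by simp
  have q1: "(1 + c*t) \<le> (1 + C*t)" "(1 + c*t') \<le> (1 + C*t')" using assms by (auto intro: mult_right_mono)
  have pos: "0<1+c*t" "0<1+c*t'" "0<1+C*t" "0<1+C*t'" using p1 q1 by auto
  have lb1: "(t' - t) / ((1 + C*t) * (1 + C*t')) \<le> h' - h" unfolding dd using p1 q1 assms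
    by (intro divide_left_mono mult_mono mult_pos_pos) (auto simp: pos)
  have lb2: "t' / (1 + C*t') \<le> h'" unfolding h'_def using p1 q1 assms
    by (intro divide_left_mono) (auto simp: pos)
  have "(t' - t) * t' / ((1 + C*t) * (1 + C*t')\<^sup>2) = ((t' - t) / ((1 + C*t) * (1 + C*t'))) * (t' / (1 + C*t'))"
    by (simp add: power2_eq_square)
  also have "\<dots> \<le> (h' - h) * h'" using lb1 lb2 assms pos
    by (intro mult_mono) (use d0 pos in auto)
  also have "\<dots> \<le> (h' - h) * (h' + h)" using d0 hpos by (intro mult_left_mono) auto
  also have "\<dots> = h'\<^sup>2 - h\<^sup>2" by (simp add: power2_eq_square algebra_simps)
  finally show "(t' - t) * t' / ((1 + C*t) * (1 + C*t')\<^sup>2) \<le> 1 / (1/t' + c)\<^sup>2 - 1 / (1/t + c)\<^sup>2"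
    using e1 e2 by simp
qed


lemma g_bound:
  fixes t c :: real assumes "0 < t" "0 \<le> c"
  shows "0 \<le> 1 / (1/t + c)\<^sup>2" "1 / (1/t + c)\<^sup>2 \<le> t\<^sup>2"
proof -
  show "0 \<le> 1 / (1/t + c)\<^sup>2" by simp
  have "1/t \<le> 1/t + c" using assms by simp
  moreover have "0 < 1/t" using assms by simp
  ultimately have "(1/t)\<^sup>2 \<le> (1/t + c)\<^sup>2" by (intro power_mono) auto
  moreover have "0 < 1/t + c" using assms by (intro add_pos_nonneg) auto
  then have "0 < (1/t + c)\<^sup>2" "0 < (1/t)\<^sup>2" using assms by auto
  ultimately have "1 / (1/t + c)\<^sup>2 \<le> 1 / (1/t)\<^sup>2"
    by (intro divide_left_mono) auto
  then show "1 / (1/t + c)\<^sup>2 \<le> t\<^sup>2" by (simp add: power_divide)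
qed

lemma recip_bound:
  fixes u v c :: real assumes "0 < u" "0 < v" "0 \<le> c" "1/u \<le> 1/v + c"
  shows "1 / (1/v + c)\<^sup>2 \<le> u\<^sup>2"
proof -
  have p: "0 < 1/u" using assms by simp
  then have "(1/u)\<^sup>2 \<le> (1/v + c)\<^sup>2" using assms by (intro power_mono) auto
  moreover have "0 < (1/v + c)\<^sup>2" "0 < (1/u)\<^sup>2" using assms by (auto intro: add_pos_nonneg)
  ultimately have "1 / (1/v + c)\<^sup>2 \<le> 1 / (1/u)\<^sup>2"
    by (intro divide_left_mono) auto
  then show ?thesis by (simp add: power_divide)
qed

lemma amgm_l:
  fixes l p q :: real assumes "0 < l"
  shows "p * q \<le> (l * p\<^sup>2 + q\<^sup>2 / l) / 2"
proof -
  have "0 \<le> (l * p - q)\<^sup>2" by simp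
  then have "2 * l * (p * q) \<le> l * (l * p\<^sup>2) + q\<^sup>2" by (simp add: power2_eq_square algebra_simps)
  then show ?thesis using assms by (simp add: field_simps power2_eq_square)
qed



theorem mainTheorem6:
  fixes M :: "'a measure" and a :: "'a \<Rightarrow> real" and s :: "'a \<Rightarrow> 'a \<Rightarrow> real"
    and m :: "complex \<Rightarrow> 'a \<Rightarrow> complex" and z :: complex and \<Phi> :: real
  assumes "prob_space M"
    and "a \<in> borel_measurable M" and "bounded (a ` space M)"
    and "(\<lambda>(x, y). s x y) \<in> borel_measurable (M \<Otimes>\<^sub>M M)"
    and "bounded ((\<lambda>(x, y). s x y) ` (space M \<times> space M))"
    and "\<And>x y. x \<in> space M \<Longrightarrow> y \<in> space M \<Longrightarrow> s x y \<ge> 0"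
    and "\<And>x y. x \<in> space M \<Longrightarrow> y \<in> space M \<Longrightarrow> s x y = s y x"
    and m_sol: "\<And>w. Im w > 0 \<Longrightarrow>
            m w \<in> borel_measurable M \<and> bounded (m w ` space M) \<and>
            (\<forall>x\<in>space M. Im (m w x) > 0 \<and> - 1 / m w x = w + complex_of_real (a x) + Sop M s (m w) x)"
    and "Im z > 0" and "\<Phi> > 0"
    and "L2norm M (m z) \<le> \<Phi>"
    and "\<exists>L::ereal. ((\<lambda>\<tau>. ereal (Gamma M a s \<Phi> \<tau>)) \<longlongrightarrow> L) at_top \<and> L > ereal (\<Phi>\<^sup>2)"
  shows "supnorm M (m z) \<le> inv_into {0<..} (Gamma M a s \<Phi>) (\<Phi>\<^sup>2)"
proof -
  interpret P: prob_space M by fact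
  define w where "w = m z"
  have wm[measurable]: "w \<in> borel_measurable M" and wb: "bounded (w ` space M)"
    and weq: "\<And>x. x \<in> space M \<Longrightarrow> Im (w x) > 0 \<and> - 1 / w x = z + complex_of_real (a x) + Sop M s w x"
    using m_sol[OF assms(9)] unfolding w_def by auto
  have am[measurable]: "a \<in> borel_measurable M" by fact
  have sm[measurable]: "case_prod s \<in> borel_measurable (M \<Otimes>\<^sub>M M)" using assms(4) by simp
  have ne: "space M \<noteq> {}" by (rule P.not_empty)
  obtain A where A: "\<And>x. x \<in> space M \<Longrightarrow> \<bar>a x\<bar> \<le> A" using assms(3) unfolding bounded_iff by auto
  obtain K where K: "\<And>x y. x \<in> space M \<Longrightarrow> y \<in> space M \<Longrightarrow> \<bar>s x y\<bar> \<le> K"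
    using assms(5) unfolding bounded_iff by fastforce
  obtain W where W: "\<And>x. x \<in> space M \<Longrightarrow> cmod (w x) \<le> W" using wb unfolding bounded_iff by auto
  obtain x0 where x0: "x0 \<in> space M" using ne by auto
  have A0: "A \<ge> 0" using A[OF x0] by linarith
  have K0: "K \<ge> 0" using K[OF x0 x0] by linarith
  have W0: "W \<ge> 0" using W[OF x0] norm_ge_zero[of "w x0"] by linarith
  have smx[measurable]: "s x \<in> borel_measurable M" if "x \<in> space M" for x
  proof -
    have "(\<lambda>t. case_prod s (x, t)) \<in> borel_measurable M"
      using measurable_Pair2[OF sm that] .
    then show ?thesis by simp
  qed
  define D where "D x y = L2norm M (\<lambda>t. s x t - s y t)" for x y
  have D_eq: "D x y = sqrt (\<integral>t. (s x t - s y t)\<^sup>2 \<partial>M)" for x y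
    unfolding D_def L2norm_def by simp
  have Dm[measurable]: "D x \<in> borel_measurable M" if "x \<in> space M" for x
  proof -
    have "(\<lambda>(y, t). (s x t - s y t)\<^sup>2) \<in> borel_measurable (M \<Otimes>\<^sub>M M)"
      using that by measurable
    then have "(\<lambda>y. \<integral>t. (s x t - s y t)\<^sup>2 \<partial>M) \<in> borel_measurable M"
      by (rule P.borel_measurable_lebesgue_integral[where f="\<lambda>y t. (s x t - s y t)\<^sup>2", simplified])
    then show ?thesis unfolding D_eq by measurable
  qed
  have sqint: "integrable M (\<lambda>t. (s x t - s y t)\<^sup>2)" if "x \<in> space M" "y \<in> space M" for x y
  proof (rule P.integrable_const_bound[where B="(2*K)\<^sup>2"])
    show "AE t in M. norm ((s x t - s y t)\<^sup>2) \<le> (2*K)\<^sup>2"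
    proof (rule AE_I2)
      fix t assume t: "t \<in> space M"
      have "\<bar>s x t - s y t\<bar> \<le> 2*K" using K[OF that(1) t] K[OF that(2) t] by linarith
      then have "\<bar>s x t - s y t\<bar>\<^sup>2 \<le> (2*K)\<^sup>2" by (intro power_mono) auto
      then show "norm ((s x t - s y t)\<^sup>2) \<le> (2*K)\<^sup>2" by simp
    qed
  qed (use that in measurable)
  have D0: "D x y \<ge> 0" for x y unfolding D_eq by (simp add: integral_nonneg)
  have DK: "D x y \<le> 2*K" if "x \<in> space M" "y \<in> space M" for x y
  proof -
    have "(\<integral>t. (s x t - s y t)\<^sup>2 \<partial>M) \<le> (2*K)\<^sup>2"
    proof (rule P.integral_le_const[OF sqint[OF that]], rule AE_I2)
      fix t assume t: "t \<in> space M"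
      have "\<bar>s x t - s y t\<bar> \<le> 2*K" using K[OF that(1) t] K[OF that(2) t] by linarith
      then have "\<bar>s x t - s y t\<bar>\<^sup>2 \<le> (2*K)\<^sup>2" by (intro power_mono) auto
      then show "(s x t - s y t)\<^sup>2 \<le> (2*K)\<^sup>2" by simp
    qed
    then have "D x y \<le> sqrt ((2*K)\<^sup>2)" unfolding D_eq by (rule real_sqrt_le_mono)
    moreover have "sqrt ((2*K)\<^sup>2) = 2*K" using K0 by (subst real_sqrt_abs) simp
    ultimately show ?thesis by linarith
  qed
  define c where "c x y = \<bar>a x - a y\<bar> + D x y * \<Phi>" for x y
  define C where "C = 2*A + 2*K*\<Phi>"
  have c0: "c x y \<ge> 0" for x y unfolding c_def using D0[of x y] assms(10) by simp
  have cC: "c x y \<le> C" if "x \<in> space M" "y \<in> space M" for x y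
  proof -
    have "\<bar>a x - a y\<bar> \<le> 2*A" using A[OF that(1)] A[OF that(2)] by linarith
    moreover have "D x y * \<Phi> \<le> 2*K*\<Phi>" using DK[OF that] assms(10) by (intro mult_right_mono) auto
    ultimately show ?thesis unfolding c_def C_def by linarith
  qed
  have C0: "C \<ge> 0" using c0[of x0 x0] cC[OF x0 x0] by linarith
  have cm[measurable]: "c x \<in> borel_measurable M" if "x \<in> space M" for x
    unfolding c_def using that by measurable
  define gf where "gf x \<tau> = (\<integral>y. 1 / (1/\<tau> + c x y)\<^sup>2 \<partial>M)" for x \<tau>
  have Gam: "Gamma M a s \<Phi> \<tau> = (INF x\<in>space M. gf x \<tau>)" for \<tau>
    unfolding Gamma_def gf_def c_def D_def by (simp add: add.assoc)
  define \<Gamma> where "\<Gamma> = Gamma M a s \<Phi>"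
  have gint: "integrable M (\<lambda>y. 1 / (1/\<tau> + c x y)\<^sup>2)" if "x \<in> space M" "\<tau> > 0" for x \<tau>
  proof (rule P.integrable_const_bound[where B="\<tau>\<^sup>2"])
    show "AE y in M. norm (1 / (1/\<tau> + c x y)\<^sup>2) \<le> \<tau>\<^sup>2"
      using g_bound[OF that(2) c0] by (intro AE_I2) simp
  qed (use that in measurable)
  have gfB: "0 \<le> gf x \<tau>" "gf x \<tau> \<le> \<tau>\<^sup>2" if "x \<in> space M" "\<tau> > 0" for x \<tau>
  proof -
    show "0 \<le> gf x \<tau>" unfolding gf_def by (simp add: integral_nonneg)
    show "gf x \<tau> \<le> \<tau>\<^sup>2" unfolding gf_def
      using g_bound[OF that(2) c0] by (intro P.integral_le_const[OF gint[OF that]] AE_I2) auto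
  qed
  define \<delta> where "\<delta> t t' = (t' - t) * t' / ((1 + C*t) * (1 + C*t')\<^sup>2)" for t t'
  have gfD: "\<delta> t t' \<le> gf x t' - gf x t" "gf x t' - gf x t \<le> t'\<^sup>2 - t\<^sup>2"
    if "x \<in> space M" "0 < t" "t < t'" for x t t'
  proof -
    have t': "t' > 0" using that by linarith
    have eq: "gf x t' - gf x t = (\<integral>y. 1 / (1/t' + c x y)\<^sup>2 - 1 / (1/t + c x y)\<^sup>2 \<partial>M)"
      unfolding gf_def using gint[OF that(1) t'] gint[OF that(1) that(2)] by simp
    have int: "integrable M (\<lambda>y. 1 / (1/t' + c x y)\<^sup>2 - 1 / (1/t + c x y)\<^sup>2)"
      using gint that t' by auto
    show "\<delta> t t' \<le> gf x t' - gf x t" unfolding eq \<delta>_def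
      by (rule P.integral_ge_const[OF int], rule AE_I2, rule g_diff(2)[OF that(2,3) c0 cC[OF that(1)]])
    show "gf x t' - gf x t \<le> t'\<^sup>2 - t\<^sup>2" unfolding eq
      by (rule P.integral_le_const[OF int], rule AE_I2, rule g_diff(1)[OF that(2,3) c0 cC[OF that(1)]])
  qed
  have \<delta>pos: "\<delta> t t' > 0" if "0 < t" "t < t'" for t t'
  proof -
    have "0 < 1 + C*t" "0 < 1 + C*t'" using that C0 by (auto intro!: add_pos_nonneg)
    then show ?thesis unfolding \<delta>_def using that by (intro divide_pos_pos mult_pos_pos) auto
  qed
  have bdd: "bdd_below ((\<lambda>x. gf x \<tau>) ` space M)" if "\<tau> > 0" for \<tau>
    using gfB(1)[OF _ that] by (intro bdd_belowI[where m=0]) auto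
  have GL: "\<Gamma> \<tau> \<le> gf x \<tau>" if "x \<in> space M" "\<tau> > 0" for x \<tau>
    unfolding \<Gamma>_def Gam by (rule cINF_lower[OF bdd[OF that(2)] that(1)])
  have GS: "\<Gamma> t + \<delta> t t' \<le> \<Gamma> t'" if "0 < t" "t < t'" for t t'
    unfolding \<Gamma>_def Gam
  proof (rule cINF_greatest[OF ne])
    fix x assume x: "x \<in> space M"
    have "(INF x\<in>space M. gf x t) \<le> gf x t" using GL[OF x that(1)] unfolding \<Gamma>_def Gam .
    then show "(INF x\<in>space M. gf x t) + \<delta> t t' \<le> gf x t'" using gfD(1)[OF x that] by linarith
  qed
  have GU: "\<Gamma> t' \<le> \<Gamma> t + (t'\<^sup>2 - t\<^sup>2)" if "0 < t" "t < t'" for t t'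
  proof -
    have "\<Gamma> t' - (t'\<^sup>2 - t\<^sup>2) \<le> \<Gamma> t"
      unfolding \<Gamma>_def Gam
    proof (rule cINF_greatest[OF ne])
      fix x assume x: "x \<in> space M"
      have "(INF x\<in>space M. gf x t') \<le> gf x t'" using GL[OF x, of t'] that unfolding \<Gamma>_def Gam by simp
      then show "(INF x\<in>space M. gf x t') - (t'\<^sup>2 - t\<^sup>2) \<le> gf x t" using gfD(2)[OF x that] by linarith
    qed
    then show ?thesis by linarith
  qed
  have Gsq: "\<Gamma> \<tau> \<le> \<tau>\<^sup>2" if "\<tau> > 0" for \<tau>
    using GL[OF x0 that] gfB(2)[OF x0 that] by linarith
  have Gstrict: "\<Gamma> t < \<Gamma> t'" if "0 < t" "t < t'" for t t'
    using GS[OF that] \<delta>pos[OF that] by linarith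
  obtain L :: ereal where L: "((\<lambda>\<tau>. ereal (\<Gamma> \<tau>)) \<longlongrightarrow> L) at_top" "L > ereal (\<Phi>\<^sup>2)"
    using assms(12) unfolding \<Gamma>_def by blast
  have "eventually (\<lambda>\<tau>. ereal (\<Phi>\<^sup>2) < ereal (\<Gamma> \<tau>)) at_top" using order_tendstoD(1)[OF L(1) L(2)] .
  then obtain T0 where T0: "\<And>\<tau>. \<tau> \<ge> T0 \<Longrightarrow> \<Phi>\<^sup>2 < \<Gamma> \<tau>" unfolding eventually_at_top_linorder by auto
  define T where "T = max T0 1"
  have GT: "\<Phi>\<^sup>2 < \<Gamma> T" using T0 unfolding T_def by auto
  define \<epsilon> where "\<epsilon> = min (\<Phi>/2) 1"
  have \<epsilon>: "0 < \<epsilon>" "\<epsilon> \<le> T" "\<epsilon> \<le> \<Phi>/2" using assms(10) by (auto simp: \<epsilon>_def T_def)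
  have "\<Gamma> \<epsilon> \<le> \<epsilon>\<^sup>2" by (rule Gsq[OF \<epsilon>(1)])
  also have "\<epsilon>\<^sup>2 \<le> (\<Phi>/2)\<^sup>2" using \<epsilon> by (intro power_mono) auto
  also have "\<dots> < \<Phi>\<^sup>2" using assms(10) by (simp add: power_divide)
  finally have Ge: "\<Gamma> \<epsilon> < \<Phi>\<^sup>2" .
  have lipstep: "\<bar>\<Gamma> v - \<Gamma> u\<bar> \<le> 2*T*(v-u)" if "0 < u" "u < v" "v \<le> T" for u v
  proof -
    have "v\<^sup>2 - u\<^sup>2 = (v-u)*(v+u)" by (simp add: power2_eq_square algebra_simps)
    also have "\<dots> \<le> (v-u)*(2*T)" using that by (intro mult_left_mono) auto
    finally show ?thesis using GU[OF that(1,2)] GS[OF that(1,2)] \<delta>pos[OF that(1,2)] by (simp add: algebra_simps)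
  qed
  have lip: "(2*T)-lipschitz_on {\<epsilon>..T} \<Gamma>"
  proof (rule lipschitz_onI)
    fix u v assume u: "u \<in> {\<epsilon>..T}" and v: "v \<in> {\<epsilon>..T}"
    consider "u < v" | "u = v" | "v < u" by linarith
    then show "dist (\<Gamma> u) (\<Gamma> v) \<le> 2*T * dist u v"
    proof cases
      case 1 then show ?thesis using lipstep[of u v] u v \<epsilon> by (auto simp: dist_real_def abs_minus_commute)
    next
      case 2 then show ?thesis using \<epsilon> by simp
    next
      case 3 then show ?thesis using lipstep[of v u] u v \<epsilon> by (auto simp: dist_real_def abs_minus_commute)
    qed
  qed (use \<epsilon> in auto)
  have cont: "continuous_on {\<epsilon>..T} \<Gamma>" by (rule lipschitz_on_continuous_on[OF lip])
  obtain \<tau>0 where \<tau>0: "\<epsilon> \<le> \<tau>0" "\<tau>0 \<le> T" "\<Gamma> \<tau>0 = \<Phi>\<^sup>2"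
    using IVT'[of \<Gamma> \<epsilon> "\<Phi>\<^sup>2" T, OF _ _ \<epsilon>(2) cont] Ge GT by auto
  have img: "\<Phi>\<^sup>2 \<in> \<Gamma> ` {0<..}" using \<tau>0 \<epsilon> by (intro image_eqI[of _ _ \<tau>0]) auto
  define \<tau>1 where "\<tau>1 = inv_into {0<..} \<Gamma> (\<Phi>\<^sup>2)"
  have \<tau>1: "\<tau>1 > 0" "\<Gamma> \<tau>1 = \<Phi>\<^sup>2" unfolding \<tau>1_def
    using inv_into_into[OF img] f_inv_into_f[OF img] by auto
  have wsq_int: "integrable M (\<lambda>t. (cmod (w t))\<^sup>2)"
  proof (rule P.integrable_const_bound[where B="W\<^sup>2"])
    show "AE t in M. norm ((cmod (w t))\<^sup>2) \<le> W\<^sup>2"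
      using W by (intro AE_I2) (auto intro: power_mono)
  qed measurable
  have wsq_le: "(\<integral>t. (cmod (w t))\<^sup>2 \<partial>M) \<le> \<Phi>\<^sup>2"
  proof -
    have i0: "0 \<le> (\<integral>t. (cmod (w t))\<^sup>2 \<partial>M)" by (simp add: integral_nonneg)
    have "sqrt (\<integral>t. (cmod (w t))\<^sup>2 \<partial>M) \<le> \<Phi>" using assms(11) unfolding w_def[symmetric] L2norm_def .
    then have "(sqrt (\<integral>t. (cmod (w t))\<^sup>2 \<partial>M))\<^sup>2 \<le> \<Phi>\<^sup>2" by (intro power_mono) auto
    then show ?thesis using i0 by simp
  qed
  have Sdiff: "cmod (Sop M s w x - Sop M s w y) \<le> D x y * \<Phi>" if x: "x \<in> space M" and y: "y \<in> space M" for x y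
  proof -
    have sint: "integrable M (\<lambda>t. complex_of_real (s u t) * w t)" if u: "u \<in> space M" for u
    proof (rule P.integrable_const_bound[where B="K*W"])
      show "AE t in M. norm (complex_of_real (s u t) * w t) \<le> K*W"
        using K[OF u] W K0 by (intro AE_I2) (auto simp: norm_mult intro: mult_mono)
    qed (use u in measurable)
    have "Sop M s w x - Sop M s w y = (\<integral>t. complex_of_real (s x t) * w t - complex_of_real (s y t) * w t \<partial>M)"
      unfolding Sop_def using sint[OF x] sint[OF y] by simp
    also have "\<dots> = (\<integral>t. complex_of_real (s x t - s y t) * w t \<partial>M)"
      by (simp add: algebra_simps)
    finally have "cmod (Sop M s w x - Sop M s w y) \<le> (\<integral>t. norm (complex_of_real (s x t - s y t) * w t) \<partial>M)"
      by simp
    also have "\<dots> = (\<integral>t. \<bar>s x t - s y t\<bar> * cmod (w t) \<partial>M)" by (simp only: norm_mult norm_of_real)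
    also have "\<dots> \<le> sqrt (\<integral>t. (s x t - s y t)\<^sup>2 \<partial>M) * sqrt (\<integral>t. (cmod (w t))\<^sup>2 \<partial>M)"
    proof (rule cs_real)
      show "0 \<le> (\<integral>t. (s x t - s y t)\<^sup>2 \<partial>M)" "0 \<le> (\<integral>t. (cmod (w t))\<^sup>2 \<partial>M)"
        by (simp_all add: integral_nonneg)
      fix l :: real assume l: "l > 0"
      have pint: "integrable M (\<lambda>t. \<bar>s x t - s y t\<bar> * cmod (w t))"
      proof (rule P.integrable_const_bound[where B="2*K*W"])
        show "AE t in M. norm (\<bar>s x t - s y t\<bar> * cmod (w t)) \<le> 2*K*W"
        proof (rule AE_I2)
          fix t assume t: "t \<in> space M"
          have "\<bar>s x t - s y t\<bar> \<le> 2*K" using K[OF x t] K[OF y t] by linarith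
          then show "norm (\<bar>s x t - s y t\<bar> * cmod (w t)) \<le> 2*K*W"
            using W[OF t] K0 by (auto intro: mult_mono)
        qed
      qed (use x y in measurable)
      have "(\<integral>t. \<bar>s x t - s y t\<bar> * cmod (w t) \<partial>M) \<le>
            (\<integral>t. (l * (s x t - s y t)\<^sup>2 + (cmod (w t))\<^sup>2 / l) / 2 \<partial>M)"
        using sqint[OF x y] wsq_int pint
        by (intro integral_mono) (auto intro: amgm_l[OF l, of "\<bar>s x t - s y t\<bar>" "cmod (w t)" for t, simplified])
      also have "\<dots> = (l * (\<integral>t. (s x t - s y t)\<^sup>2 \<partial>M) + (\<integral>t. (cmod (w t))\<^sup>2 \<partial>M) / l) / 2"
        using sqint[OF x y] wsq_int by simp
      finally show "(\<integral>t. \<bar>s x t - s y t\<bar> * cmod (w t) \<partial>M) \<le>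
            (l * (\<integral>t. (s x t - s y t)\<^sup>2 \<partial>M) + (\<integral>t. (cmod (w t))\<^sup>2 \<partial>M) / l) / 2" .
    qed
    also have "\<dots> \<le> D x y * \<Phi>" unfolding D_eq[symmetric]
      using assms(11) D0[of x y] unfolding w_def[symmetric] L2norm_def
      by (intro mult_left_mono) auto
    finally show ?thesis .
  qed
  have key: "\<Gamma> (cmod (w x)) \<le> \<Phi>\<^sup>2" if x: "x \<in> space M" for x
  proof -
    have wx: "cmod (w x) > 0" using weq[OF x] by (auto simp: zero_less_norm_iff)
    have pt: "1 / (1 / cmod (w x) + c x y)\<^sup>2 \<le> (cmod (w y))\<^sup>2" if y: "y \<in> space M" for y
    proof -
      have wy: "cmod (w y) > 0" using weq[OF y] by (auto simp: zero_less_norm_iff)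
      have e1: "1 / w x = -(z + complex_of_real (a x) + Sop M s w x)"
        using weq[OF x] by (metis minus_divide_left minus_minus)
      have e2: "1 / w y = -(z + complex_of_real (a y) + Sop M s w y)"
        using weq[OF y] by (metis minus_divide_left minus_minus)
      have "1 / w y = 1 / w x + complex_of_real (a x - a y) + (Sop M s w x - Sop M s w y)"
        unfolding e1 e2 by (simp add: algebra_simps)
      then have "cmod (1 / w y) \<le> cmod (1 / w x) + cmod (complex_of_real (a x - a y)) + cmod (Sop M s w x - Sop M s w y)"
        by (metis norm_triangle_ineq order_trans add_right_mono)
      then have "1 / cmod (w y) \<le> 1 / cmod (w x) + \<bar>a x - a y\<bar> + D x y * \<Phi>"
        using Sdiff[OF x y] norm_of_real[of "a x - a y", where 'a=complex]
        unfolding norm_divide norm_one by linarith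
      then have "1 / cmod (w y) \<le> 1 / cmod (w x) + c x y" unfolding c_def by simp
      then show ?thesis by (rule recip_bound[OF wy wx c0])
    qed
    have "\<Gamma> (cmod (w x)) \<le> gf x (cmod (w x))" by (rule GL[OF x wx])
    also have "\<dots> \<le> (\<integral>t. (cmod (w t))\<^sup>2 \<partial>M)" unfolding gf_def
      using gint[OF x wx] wsq_int pt by (intro integral_mono) auto
    also have "\<dots> \<le> \<Phi>\<^sup>2" by (rule wsq_le)
    finally show ?thesis .
  qed
  have "supnorm M w \<le> \<tau>1" unfolding supnorm_def
  proof (rule cSUP_least[OF ne])
    fix x assume x: "x \<in> space M"
    have wx: "cmod (w x) > 0" using weq[OF x] by (auto simp: zero_less_norm_iff)
    show "cmod (w x) \<le> \<tau>1"
    proof (rule ccontr)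
      assume "\<not> ?thesis"
      then have "\<Gamma> \<tau>1 < \<Gamma> (cmod (w x))" using \<tau>1 by (intro Gstrict) auto
      then show False using key[OF x] \<tau>1 by linarith
    qed
  qed
  then show ?thesis unfolding w_def \<tau>1_def \<Gamma>_def .
qed
end
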